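(* Let $N\in\mathbb N_0$, $0<\pi_1,\dots,\pi_p<1$ pairwise distinct, $\vec n\in\mathbb N_0^p$ with $|\vec n|\le N$, and $i$ with $n_i\ge1$. The type I multiple Kravchuk polynomials are $$K^{(i)}_{\vec n}(x;\vec\pi,N)=\frac{(-1)^{n_i-1}}{(n_i-1)!(-N)_{|\vec n|-n_i}(1-\pi_i)^{n_i-1}}\prod_{q\ne i}\frac1{(\pi_q-\pi_i)^{n_q}}\sum_{\ell_1,\dots,\ell_p\ge0}\frac{(-n_i+1)_L}{(-N+|\vec n|-n_i)_L}(-x)_{\ell_i}\frac{\pi_i^{-\ell_i}}{\ell_i!}\prod_{q\ne i}\frac{(n_q)_{\ell_q}}{\ell_q!}\Big(\frac{1-\pi_q}{\pi_i-\pi_q}\Big)^{\ell_q},$$ with $L=\ell_1+\cdots+\ell_p$ (the sum is finite since $(-n_i+1)_L=0$ for $L\ge n_i$).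
   Context: Kravchuk weights $w_i(x)=\binom{N}{x}\pi_i^x(1-\pi_i)^{N-x}$, $x\in\{0,\dots,N\}$. Type I polynomials $K^{(i)}_{\vec n}$: $\deg\le n_i-1$ (zero if $n_i=0$), $\sum_i\sum_{k=0}^Nk^jK^{(i)}_{\vec n}(k)w_i(k)=0$ for $0\le j\le|\vec n|-2$, $=1$ for $j=|\vec n|-1$. $(a)_m$ Pochhammer symbol. *)

theory Defs
  imports Complex_Main "HOL-Library.FuncSet" "HOL-Computational_Algebra.Polynomial"
begin

text \<open>Indices of the p weights are 0,...,p-1. |n| = sum of n over {..<p}.\<close>

definition kr_weight :: "nat \<Rightarrow> real \<Rightarrow> nat \<Rightarrow> real" where
  "kr_weight N pr x = real (N choose x) * pr ^ x * (1 - pr) ^ (N - x)"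

definition abs_multi :: "nat \<Rightarrow> (nat \<Rightarrow> nat) \<Rightarrow> nat" where
  "abs_multi p n = (\<Sum>q<p. n q)"

definition is_typeI ::
  "nat \<Rightarrow> nat \<Rightarrow> (nat \<Rightarrow> real) \<Rightarrow> (nat \<Rightarrow> nat) \<Rightarrow> (nat \<Rightarrow> real poly) \<Rightarrow> bool" where
  "is_typeI p N pr n K \<longleftrightarrow>
     (\<forall>i<p. (n i = 0 \<longrightarrow> K i = 0) \<and> (1 \<le> n i \<longrightarrow> degree (K i) \<le> n i - 1)) \<and>
     (\<forall>j. j + 1 \<le> abs_multi p n \<longrightarrow>
        (\<Sum>i<p. \<Sum>k\<le>N. real k ^ j * poly (K i) (real k) * kr_weight N (pr i) k)
          = (if j + 1 = abs_multi p n then 1 else 0))"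

text \<open>The explicit formula. The sum over l_1..l_p >= 0 is taken over l with each l_q < n_i;
  all omitted terms have L >= n_i and hence vanish since (-n_i+1)_L = 0.\<close>
definition kr_formula ::
  "nat \<Rightarrow> nat \<Rightarrow> (nat \<Rightarrow> real) \<Rightarrow> (nat \<Rightarrow> nat) \<Rightarrow> nat \<Rightarrow> real \<Rightarrow> real" where
  "kr_formula p N pr n i x =
     (-1) ^ (n i - 1)
     / (fact (n i - 1) * pochhammer (- real N) (abs_multi p n - n i) * (1 - pr i) ^ (n i - 1))
     * (\<Prod>q\<in>{..<p} - {i}. 1 / (pr q - pr i) ^ n q)
     * (\<Sum>l\<in>PiE {..<p} (\<lambda>_. {..<n i}).
          let L = (\<Sum>q<p. l q) in
          pochhammer (- real (n i) + 1) L
            / pochhammer (- real N + real (abs_multi p n) - real (n i)) L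
          * pochhammer (- x) (l i) * (pr i) powi (- int (l i)) / fact (l i)
          * (\<Prod>q\<in>{..<p} - {i}. pochhammer (real (n q)) (l q) / fact (l q)
                * ((1 - pr q) / (pr i - pr q)) ^ l q))"

end

theory Submission
  imports Defs "HOL-Computational_Algebra.Formal_Power_Series"
begin

unbundle fps_syntax

definition Bs :: "real \<Rightarrow> real \<Rightarrow> real fps" where
  "Bs a z = Abs_fps (\<lambda>t. (a gchoose t) * z ^ t)"

lemma Bs_nth[simp]: "Bs a z $ t = (a gchoose t) * z ^ t"
  by (simp add: Bs_def)

lemma Bs_add: "Bs a z * Bs b z = Bs (a + b) z"
proof (rule fps_ext)
  fix t
  have "(Bs a z * Bs b z) $ t = (\<Sum>k=0..t. (a gchoose k) * (b gchoose (t - k)) * z ^ t)"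
    unfolding fps_mult_nth
    by (intro sum.cong refl) (simp add: power_add[symmetric] algebra_simps)
  also have "\<dots> = (a + b gchoose t) * z ^ t"
    by (simp add: sum_distrib_right[symmetric] gbinomial_Vandermonde)
  finally show "(Bs a z * Bs b z) $ t = Bs (a + b) z $ t" by simp
qed

lemma Bs_0[simp]: "Bs 0 z = 1"
  by (rule fps_ext) (simp add: gbinomial_0_left)

lemma gch_one: "((1::real) gchoose k) = (if k \<le> 1 then 1 else 0)"
  using binomial_gbinomial[of 1 k, where 'a=real] by (cases k) (auto simp: binomial_eq_0)

lemma Bs_1: "Bs 1 z = 1 + fps_const z * fps_X"
proof (rule fps_ext)
  fix t show "Bs 1 z $ t = (1 + fps_const z * fps_X) $ t"
    by (cases t) (auto simp: gch_one)
qed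

lemma Bs_1m: "Bs 1 (-1) = 1 - fps_X"
  by (simp add: Bs_1 fps_const_neg[symmetric] del: fps_const_neg)

lemma Bs_step_nth:
  "(Bs (e + 1) (-1) * G) $ m = (Bs e (-1) * G) $ m - (if m = 0 then 0 else (Bs e (-1) * G) $ (m - 1))"
proof -
  have "Bs (e + 1) (-1) * G = Bs e (-1) * G - fps_X * (Bs e (-1) * G)"
    by (simp add: Bs_add[symmetric] Bs_1m algebra_simps)
  then show ?thesis by simp
qed

lemma abs_multi_dec:
  assumes "k < p" "1 \<le> n k"
  shows "abs_multi p (n(k := n k - 1)) = abs_multi p n - 1" "1 \<le> abs_multi p n"
proof -
  have a: "abs_multi p n = n k + (\<Sum>q\<in>{..<p}-{k}. n q)"
    unfolding abs_multi_def using assms by (simp add: sum.remove)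
  have b: "abs_multi p (n(k := n k - 1)) = (n k - 1) + (\<Sum>q\<in>{..<p}-{k}. n q)"
    unfolding abs_multi_def using assms by (simp add: sum.remove)
  show "abs_multi p (n(k := n k - 1)) = abs_multi p n - 1" "1 \<le> abs_multi p n"
    using a b assms by auto
qed

locale KR =
  fixes p :: nat and pr :: "nat \<Rightarrow> real"
  assumes pr01: "\<And>q. q < p \<Longrightarrow> 0 < pr q \<and> pr q < 1"
    and prinj: "inj_on pr {..<p}"
begin

definition zz :: "nat \<Rightarrow> nat \<Rightarrow> real" where
  "zz i q = (1 - pr q) / (pr i - pr q)"

definition GG :: "(nat \<Rightarrow> nat) \<Rightarrow> nat \<Rightarrow> real fps" where
  "GG n i = (\<Prod>q\<in>{..<p}-{i}. Bs (- real (n q)) (- zz i q))"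

definition cc :: "(nat \<Rightarrow> nat) \<Rightarrow> nat \<Rightarrow> real" where
  "cc n i = (\<Prod>q\<in>{..<p}-{i}. 1 / (pr q - pr i) ^ (n q))"

definition W :: "(nat \<Rightarrow> nat) \<Rightarrow> nat \<Rightarrow> nat \<Rightarrow> real" where
  "W n i j = (if n i = 0 then 0 else
     (1 - pr i) powi (int j - int (n i) + 1) * cc n i *
     (Bs (real (abs_multi p n) - 2 - real j) (-1) * GG n i) $ (n i - 1))"

lemma pr_neq: "i < p \<Longrightarrow> q < p \<Longrightarrow> i \<noteq> q \<Longrightarrow> pr i \<noteq> pr q"
  using prinj by (auto dest: inj_onD)

lemma W_rec:
  assumes k: "k < p" "1 \<le> n k" and i: "i < p"
  shows "W n i (Suc j) = (1 - pr k) * W n i j + W (n(k := n k - 1)) i j"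
proof -
  define n' where "n' = n(k := n k - 1)"
  define A where "A = abs_multi p n"
  have A': "abs_multi p n' = A - 1" "1 \<le> A" using abs_multi_dec[of k p n, OF k] by (auto simp: n'_def A_def)
  define e where "e = real A - 3 - real j"
  have eA: "real A - 2 - real (Suc j) = e" "real A - 2 - real j = e + 1"
     "real (abs_multi p n') - 2 - real j = e"
    using A' by (auto simp: e_def of_nat_diff)
  have pk: "0 < 1 - pr k" using pr01[OF k(1)] by auto
  have pi: "0 < 1 - pr i" using pr01[OF i] by auto
  show ?thesis
  proof (cases "i = k")
    case True
    have cc': "cc n' k = cc n k" unfolding cc_def n'_def by (intro prod.cong) auto
    have GG': "GG n' k = GG n k" unfolding GG_def n'_def by (intro prod.cong) auto
    define m where "m = n k - 1"
    have nk: "n k = Suc m" using k m_def by auto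
    have pw1: "(1 - pr k) powi (int (Suc j) - int (n k) + 1) = (1 - pr k) powi (int j - int m + 1)"
      by (simp add: nk)
    have pw2: "(1 - pr k) * (1 - pr k) powi (int j - int (n k) + 1) = (1 - pr k) powi (int j - int m + 1)"
    proof -
      have "(1 - pr k) powi (int j - int m + 1) = (1 - pr k) powi (int j - int (n k) + 1) * (1 - pr k) powi 1"
        using pk by (subst power_int_add[symmetric]) (auto simp: nk)
      then show ?thesis by simp
    qed
    show ?thesis
    proof (cases "m = 0")
      case True
      have w0: "W (n(k := n k - 1)) k j = 0" using True nk by (simp add: W_def)
      moreover have "W n k (Suc j) = (1 - pr k) ^ Suc j * cc n k * (Bs e (-1) * GG n k) $ 0"
        using True nk by (simp add: W_def eA(1)[unfolded A_def] power_int_def nat_add_distrib of_nat_Suc)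
      moreover have "W n k j = (1 - pr k) ^ j * cc n k * (Bs (e + 1) (-1) * GG n k) $ 0"
        using True nk by (simp add: W_def eA(2)[unfolded A_def] power_int_def)
      moreover have "(Bs (e + 1) (-1) * GG n k) $ 0 = (Bs e (-1) * GG n k) $ 0"
        by (simp add: Bs_step_nth)
      ultimately show ?thesis using \<open>i = k\<close> by (simp only: mult.assoc power_Suc)
    next
      case False
      have n'k: "n' k = m" using nk by (simp add: n'_def)
      have w1: "W n' k j = (1 - pr k) powi (int j - int m + 1) * cc n k * (Bs e (-1) * GG n k) $ (m - 1)"
        using False by (simp add: W_def n'k cc' GG' eA(3) del: of_nat_Suc)
      have w2: "W n k (Suc j) = (1 - pr k) powi (int j - int m + 1) * cc n k * (Bs e (-1) * GG n k) $ m"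
        unfolding W_def pw1 using nk eA(1) by (simp add: A_def del: of_nat_Suc)
      have w3: "W n k j = (1 - pr k) powi (int j - int (n k) + 1) * cc n k * 
          ((Bs e (-1) * GG n k) $ m - (Bs e (-1) * GG n k) $ (m - 1))"
        unfolding W_def A_def[symmetric] eA(2) using nk False by (simp add: Bs_step_nth del: of_nat_Suc)
      have "W n i (Suc j) = (1 - pr k) * W n i j + W n' i j"
        unfolding \<open>i = k\<close> w1 w2 w3 pw2[symmetric] by (simp add: algebra_simps)
      then show ?thesis by (simp add: n'_def)
    qed
  next
    case False
    show ?thesis
    proof (cases "n i = 0")
      case True
      then show ?thesis using False by (simp add: W_def n'_def)
    next
      case ni: False
      have n'i: "n' i = n i" using False by (simp add: n'_def)
      have ne: "pr k - pr i \<noteq> 0" using pr_neq[OF k(1) i] False by auto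
      have kin: "k \<in> {..<p} - {i}" using k False by auto
      have cc': "cc n' i = cc n i * (pr k - pr i)"
      proof -
        have "cc n' i = 1 / (pr k - pr i) ^ (n k - 1) * (\<Prod>q\<in>{..<p}-{i}-{k}. 1 / (pr q - pr i) ^ (n q))"
          unfolding cc_def using kin by (subst prod.remove[OF _ kin]) (auto simp: n'_def intro!: prod.cong)
        also have "1 / (pr k - pr i) ^ (n k - 1) = 1 / (pr k - pr i) ^ (n k) * (pr k - pr i)"
          using ne k(2) by (cases "n k") (auto simp: field_simps)
        also have "cc n i = 1 / (pr k - pr i) ^ (n k) * (\<Prod>q\<in>{..<p}-{i}-{k}. 1 / (pr q - pr i) ^ (n q))"
          unfolding cc_def using kin by (subst prod.remove[OF _ kin]) auto
        ultimately show ?thesis by simp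
      qed
      have GG': "GG n i = GG n' i * Bs (-1) (- zz i k)"
      proof -
        have "GG n' i = Bs (- real (n k - 1)) (- zz i k) * (\<Prod>q\<in>{..<p}-{i}-{k}. Bs (- real (n q)) (- zz i q))"
          unfolding GG_def using kin by (subst prod.remove[OF _ kin]) (auto simp: n'_def intro!: prod.cong)
        moreover have "GG n i = Bs (- real (n k)) (- zz i k) * (\<Prod>q\<in>{..<p}-{i}-{k}. Bs (- real (n q)) (- zz i q))"
          unfolding GG_def using kin by (subst prod.remove[OF _ kin]) auto
        moreover have "Bs (- real (n k)) (- zz i k) = Bs (- real (n k - 1)) (- zz i k) * Bs (-1) (- zz i k)"
          using k(2) by (simp add: Bs_add of_nat_diff)
        ultimately show ?thesis by (simp add: algebra_simps)
      qed
      have z: "- (1 - pr k) + (pr k - pr i) * (- zz i k) = 0"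
        using ne by (simp add: zz_def field_simps)
      have fid: "fps_const (1 - pr i) * (Bs e (-1) * GG n i) =
          fps_const (1 - pr k) * (Bs (e + 1) (-1) * GG n i) + fps_const (pr k - pr i) * (Bs e (-1) * GG n' i)"
      proof -
        have b1: "Bs (e + 1) (-1) = Bs e (-1) * (1 - fps_X)"
          by (simp add: Bs_add[symmetric] Bs_1m)
        have b2: "Bs (-1) (- zz i k) * (1 + fps_const (- zz i k) * fps_X) = 1"
          using Bs_add[of "-1" "- zz i k" 1] by (simp add: Bs_1)
        have "GG n' i = GG n i * (1 + fps_const (- zz i k) * fps_X)"
          using b2 by (simp add: GG' mult.assoc)
        then have "fps_const (1 - pr k) * (Bs (e + 1) (-1) * GG n i) + fps_const (pr k - pr i) * (Bs e (-1) * GG n' i)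
           = Bs e (-1) * GG n i * (fps_const (1 - pr k) * (1 - fps_X) + fps_const (pr k - pr i) * (1 + fps_const (- zz i k) * fps_X))"
          unfolding b1 by (simp add: algebra_simps)
        also have "fps_const (1 - pr k) * (1 - fps_X) + fps_const (pr k - pr i) * (1 + fps_const (- zz i k) * fps_X)
           = fps_const (1 - pr i) + fps_const (- (1 - pr k) + (pr k - pr i) * (- zz i k)) * fps_X"
          by (rule fps_ext) (simp add: fps_X_nth algebra_simps)
        also have "\<dots> = fps_const (1 - pr i)" using z by simp
        finally show ?thesis by (simp add: algebra_simps)
      qed
      have cid: "(1 - pr i) * (Bs e (-1) * GG n i) $ (n i - 1) =
          (1 - pr k) * (Bs (e + 1) (-1) * GG n i) $ (n i - 1) + (pr k - pr i) * (Bs e (-1) * GG n' i) $ (n i - 1)"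
        using arg_cong[OF fid, of "\<lambda>f. f $ (n i - 1)"] by simp
      have pw: "(1 - pr i) powi (int (Suc j) - int (n i) + 1) = (1 - pr i) * (1 - pr i) powi (int j - int (n i) + 1)"
      proof -
        have "(1 - pr i) powi (int (Suc j) - int (n i) + 1) = (1 - pr i) powi (int j - int (n i) + 1) * (1 - pr i) powi 1"
          using pi by (subst power_int_add[symmetric]) auto
        then show ?thesis by simp
      qed
      define P where "P = (1 - pr i) powi (int j - int (n i) + 1)"
      have w1: "W n i (Suc j) = (1 - pr i) * P * cc n i * (Bs e (-1) * GG n i) $ (n i - 1)"
        unfolding W_def A_def[symmetric] eA(1) pw P_def using ni by simp
      have w2: "W n i j = P * cc n i * (Bs (e + 1) (-1) * GG n i) $ (n i - 1)"
        unfolding W_def A_def[symmetric] eA(2) P_def using ni by simp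
      have w3: "W n' i j = P * (cc n i * (pr k - pr i)) * (Bs e (-1) * GG n' i) $ (n i - 1)"
        unfolding W_def eA(3) P_def n'i cc'[symmetric] using ni by simp
      define X where "X = (Bs e (-1) * GG n i) $ (n i - 1)"
      define Y where "Y = (Bs (e + 1) (-1) * GG n i) $ (n i - 1)"
      define Z where "Z = (Bs e (-1) * GG n' i) $ (n i - 1)"
      have cid': "(1 - pr i) * X = (1 - pr k) * Y + (pr k - pr i) * Z" using cid by (simp only: X_def Y_def Z_def)
      have "W n i (Suc j) = P * cc n i * ((1 - pr i) * X)" unfolding w1 X_def by (simp only: mult_ac)
      also have "\<dots> = P * cc n i * ((1 - pr k) * Y + (pr k - pr i) * Z)" by (simp only: cid')
      also have "\<dots> = (1 - pr k) * W n i j + W n' i j" unfolding w2 w3 Y_def[symmetric] Z_def[symmetric]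
        by (simp add: algebra_simps)
      finally show ?thesis by (simp only: n'_def)
    qed
  qed
qed

lemma sum_W_rec:
  assumes k: "k < p" "1 \<le> n k"
  shows "(\<Sum>i<p. W n i (Suc j)) = (1 - pr k) * (\<Sum>i<p. W n i j) + (\<Sum>i<p. W (n(k := n k - 1)) i j)"
  by (simp add: W_rec[of k n, OF k] sum.distrib sum_distrib_left)

lemma W_single:
  assumes k: "k < p" and z: "\<And>q. q < p \<Longrightarrow> q \<noteq> k \<Longrightarrow> n q = 0"
  shows "(\<Sum>i<p. W n i j) = W n k j"
proof -
  have "(\<Sum>i<p. W n i j) = W n k j + (\<Sum>i\<in>{..<p}-{k}. W n i j)"
    using k by (simp add: sum.remove)
  also have "(\<Sum>i\<in>{..<p}-{k}. W n i j) = 0"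
    using z by (intro sum.neutral) (auto simp: W_def)
  finally show ?thesis by simp
qed

lemma cc_GG_single:
  assumes k: "k < p" and z: "\<And>q. q < p \<Longrightarrow> q \<noteq> k \<Longrightarrow> n q = 0"
  shows "cc n k = 1" "GG n k = 1"
  using z unfolding cc_def GG_def by (auto intro!: prod.neutral)

lemma gch_nat_big: "m < k \<Longrightarrow> (real m gchoose k) = 0"
  by (simp add: binomial_gbinomial[symmetric] binomial_eq_0)

lemma W_sum:
  "abs_multi p n = A \<Longrightarrow> j + 1 \<le> A \<Longrightarrow> (\<Sum>i<p. W n i j) = (if j + 1 = A then 1 else 0)"
proof (induction A arbitrary: n j)
  case 0
  then show ?case by simp
next
  case (Suc A0)
  have "\<exists>k<p. 1 \<le> n k"
  proof (rule ccontr)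
    assume "\<not> ?thesis"
    then have "abs_multi p n = 0" unfolding abs_multi_def by (intro sum.neutral) auto
    then show False using Suc.prems by simp
  qed
  then obtain k where k: "k < p" "1 \<le> n k" by blast
  note IHA = Suc.IH
  have Ak: "abs_multi p (n(k := n k - 1)) = A0" using abs_multi_dec[of k p n, OF k] Suc.prems by simp
  have split: "abs_multi p n = n k + (\<Sum>q\<in>{..<p}-{k}. n q)"
    unfolding abs_multi_def using k by (simp add: sum.remove)
  show ?case using Suc.prems(2)
  proof (induction j)
    case 0
    show ?case
    proof (cases "A0 = 0")
      case True
      then have "(\<Sum>q\<in>{..<p}-{k}. n q) = 0" "n k = 1" using split Suc.prems k by auto
      then have z: "\<And>q. q < p \<Longrightarrow> q \<noteq> k \<Longrightarrow> n q = 0" by auto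
      have "(\<Sum>i<p. W n i 0) = W n k 0" by (rule W_single[OF k(1) z])
      also have "\<dots> = 1" using \<open>n k = 1\<close> cc_GG_single[of k n] k z by (simp add: W_def)
      finally show ?thesis using True by simp
    next
      case False
      show ?thesis
      proof (cases "\<exists>k2<p. k2 \<noteq> k \<and> 1 \<le> n k2")
        case True
        then obtain k2 where k2: "k2 < p" "k2 \<noteq> k" "1 \<le> n k2" by blast
        have Ak2: "abs_multi p (n(k2 := n k2 - 1)) = A0"
          using abs_multi_dec[of k2 p n, OF k2(1) k2(3)] Suc.prems by simp
        have le: "0 + 1 \<le> A0" using False by simp
        have e1: "(\<Sum>i<p. W (n(k := n k - 1)) i 0) = (if 0 + 1 = A0 then 1 else 0)"
          by (rule IHA[OF Ak le])
        have e2: "(\<Sum>i<p. W (n(k2 := n k2 - 1)) i 0) = (if 0 + 1 = A0 then 1 else 0)"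
          by (rule IHA[OF Ak2 le])
        have "(1 - pr k) * (\<Sum>i<p. W n i 0) = (1 - pr k2) * (\<Sum>i<p. W n i 0)"
          using sum_W_rec[of k n 0, OF k] sum_W_rec[of k2 n 0, OF k2(1) k2(3)] e1 e2 by (simp add: algebra_simps) (metis add_left_cancel)
        then have "(pr k2 - pr k) * (\<Sum>i<p. W n i 0) = 0" by (simp add: algebra_simps)
        moreover have "pr k2 - pr k \<noteq> 0" using pr_neq[OF k2(1) k(1) k2(2)] by simp
        ultimately show ?thesis using False by simp
      next
        case False2: False
        then have z: "\<And>q. q < p \<Longrightarrow> q \<noteq> k \<Longrightarrow> n q = 0" by force
        then have "(\<Sum>q\<in>{..<p}-{k}. n q) = 0" by (intro sum.neutral) auto
        then have nk: "n k = Suc A0" using split Suc.prems by simp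
        have "(\<Sum>i<p. W n i 0) = W n k 0" by (rule W_single[OF k(1) z])
        also have "\<dots> = 0"
        proof -
          have c1: "cc n k = 1" "GG n k = 1" using cc_GG_single[of k n] k z by auto
          have g: "(real A0 - 1 gchoose A0) = 0"
            using gch_nat_big[of "A0 - 1" A0] False by (simp add: of_nat_diff)
          show ?thesis using nk c1 g Suc.prems(1)
            by (simp add: W_def)
        qed
        finally show ?thesis using False by simp
      qed
    qed
  next
    case (Suc j)
    have e0: "(\<Sum>i<p. W n i j) = 0" using Suc.IH Suc.prems by simp
    have le: "j + 1 \<le> A0" using Suc.prems by simp
    have e1: "(\<Sum>i<p. W (n(k := n k - 1)) i j) = (if j + 1 = A0 then 1 else 0)"
      by (rule IHA[OF Ak le])
    show ?case using sum_W_rec[of k n j, OF k] e0 e1 by simp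
  qed
qed

end

lemma poch_neg_nat:
  "pochhammer (- real m) t = (if t \<le> m then (-1) ^ t * fact m / fact (m - t) else 0)"
proof (cases "t \<le> m")
  case True
  have "pochhammer (- real m) t = (-1) ^ t * pochhammer (real m - real t + 1) t"
    by (simp add: pochhammer_minus)
  also have "pochhammer (real m - real t + 1) t = (real m gchoose t) * fact t"
    by (simp add: gbinomial_pochhammer')
  also have "(real m gchoose t) = fact m / (fact t * fact (m - t))"
    using True by (simp add: binomial_gbinomial[symmetric] binomial_fact)
  finally show ?thesis using True by simp
next
  case False
  then show ?thesis by (simp add: pochhammer_of_nat_eq_0_lemma)
qed

lemma aux1: "(a::real) \<noteq> 0 \<Longrightarrow> b \<noteq> 0 \<Longrightarrow> c \<noteq> 0 \<Longrightarrow> d \<noteq> 0 \<Longrightarrow>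
   (u * a / c) * (v * b / d) * (e / (b * a) * X) = u * v * (e / (d * c)) * X"
  by (simp add: field_simps)

lemma aux2: "(m::real) \<noteq> 0 \<Longrightarrow> (-1) ^ j * (-1) ^ t * (e / (d * c)) * (xs * xt * (ym * yj))
  = ((-1) ^ t * (-1) ^ j * e / m) * xt * yj * ((m / (d * c)) * xs * ym)"
  by (simp add: field_simps)

lemma mom_basic:
  fixes x :: real
  shows "(\<Sum>k\<le>N. pochhammer (real k - real N) j * pochhammer (- real k) t * kr_weight N x k)
    = pochhammer (- real N) (t + j) * x ^ t * (1 - x) ^ j"
proof (cases "t + j \<le> N")
  case False
  have "pochhammer (real k - real N) j * pochhammer (- real k) t = 0" if "k \<le> N" for k
  proof (cases "t \<le> k")
    case True
    then have "j > N - k" using False that by linarith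
    then have "pochhammer (- real (N - k)) j = 0" by (simp add: poch_neg_nat)
    then show ?thesis using that by (simp add: of_nat_diff)
  next
    case False
    then show ?thesis by (simp add: poch_neg_nat)
  qed
  moreover have "pochhammer (- real N) (t + j) = 0" using False by (simp add: poch_neg_nat)
  ultimately show ?thesis by (auto intro!: sum.neutral)
next
  case True
  define M where "M = N - (t + j)"
  define f where "f k = pochhammer (real k - real N) j * pochhammer (- real k) t * kr_weight N x k" for k
  have C: "(-1) ^ (t + j) * fact N / fact M = pochhammer (- real N) (t + j)"
    using True by (simp add: poch_neg_nat M_def)
  have z: "f k = 0" if "k \<le> N" "k \<notin> {t..N-j}" for k
  proof (cases "t \<le> k")
    case True
    then have "j > N - k" using that by auto
    then have "pochhammer (- real (N - k)) j = 0" by (simp add: poch_neg_nat)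
    then show ?thesis using that by (simp add: of_nat_diff f_def)
  next
    case False
    then show ?thesis by (simp add: poch_neg_nat f_def)
  qed
  have "(\<Sum>k\<le>N. f k) = (\<Sum>k\<in>{t..N-j}. f k)"
    using z by (intro sum.mono_neutral_right) auto
  also have "{t..N-j} = {0 + t..M + t}" using True by (auto simp: M_def)
  also have "(\<Sum>k\<in>{0 + t..M + t}. f k) = (\<Sum>s\<in>{0..M}. f (s + t))"
    by (rule sum.shift_bounds_cl_nat_ivl)
  also have "\<dots> = (\<Sum>s\<in>{0..M}. pochhammer (- real N) (t + j) * x ^ t * (1 - x) ^ j *
       (real (M choose s) * x ^ s * (1 - x) ^ (M - s)))"
  proof (intro sum.cong refl)
    fix s assume s: "s \<in> {0..M}"
    have st: "s + t + j \<le> N" "s \<le> M" using s True unfolding M_def by auto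
    have k0: "real (N - (s + t)) = real N - real (s + t)" using st by (intro of_nat_diff) linarith
    have k1: "real (s + t) - real N = - real (N - (s + t))" unfolding k0 by simp
    have p1: "pochhammer (real (s + t) - real N) j = (-1) ^ j * fact (N - (s + t)) / fact (M - s)"
    proof -
      have "pochhammer (real (s + t) - real N) j = pochhammer (- real (N - (s + t))) j"
        by (simp only: k1)
      also have "\<dots> = (-1) ^ j * fact (N - (s + t)) / fact (N - (s + t) - j)"
      proof -
        have "j \<le> N - (s + t)" using st by linarith
        then show ?thesis by (subst poch_neg_nat) (simp only: if_True)
      qed
      also have "N - (s + t) - j = M - s" using st unfolding M_def by linarith
      finally show ?thesis .
    qed
    have p2: "pochhammer (- real (s + t)) t = (-1) ^ t * fact (s + t) / fact s"
    proof -
      have "t \<le> s + t" by simp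
      then show ?thesis by (subst poch_neg_nat) (simp only: if_True add_diff_cancel_right')
    qed
    have w: "kr_weight N x (s + t) = fact N / (fact (s + t) * fact (N - (s + t))) * x ^ (s + t) * (1 - x) ^ (N - (s + t))"
    proof -
      have "s + t \<le> N" using st by linarith
      then show ?thesis unfolding kr_weight_def by (simp only: binomial_fact)
    qed
    have b: "real (M choose s) = fact M / (fact s * fact (M - s))"
      using st(2) by (rule binomial_fact)
    have e: "N - (s + t) = (M - s) + j" using st unfolding M_def by linarith
    show "f (s + t) = pochhammer (- real N) (t + j) * x ^ t * (1 - x) ^ j *
       (real (M choose s) * x ^ s * (1 - x) ^ (M - s))"
    proof -
      have "f (s + t) = ((-1) ^ j * fact (N - (s + t)) / fact (M - s)) * ((-1) ^ t * fact (s + t) / fact s) *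
           (fact N / (fact (s + t) * fact (N - (s + t))) * (x ^ (s + t) * (1 - x) ^ (N - (s + t))))"
        unfolding f_def p1 p2 w by (simp only: mult.assoc)
      also have "\<dots> = (-1) ^ j * (-1) ^ t * (fact N / (fact s * fact (M - s))) * (x ^ (s + t) * (1 - x) ^ (N - (s + t)))"
        by (rule aux1) auto
      also have "\<dots> = ((-1) ^ (t + j) * fact N / fact M) * x ^ t * (1 - x) ^ j * ((fact M / (fact s * fact (M - s))) * x ^ s * (1 - x) ^ (M - s))"
        unfolding e power_add by (rule aux2) auto
      finally show ?thesis unfolding b C .
    qed
  qed
  also have "\<dots> = pochhammer (- real N) (t + j) * x ^ t * (1 - x) ^ j * (x + (1 - x)) ^ M"
    unfolding binomial_ring by (simp add: sum_distrib_left atLeast0AtMost)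
  finally show ?thesis by (simp add: f_def)
qed

lemma PiE_conv:
  fixes f :: "nat \<Rightarrow> nat \<Rightarrow> real" and g :: "nat \<Rightarrow> real"
  assumes "finite I" "\<And>L. b \<le> L \<Longrightarrow> g L = 0"
  shows "(\<Sum>l\<in>PiE I (\<lambda>_. {..<b}). g (\<Sum>q\<in>I. l q) * (\<Prod>q\<in>I. f q (l q)))
        = (\<Sum>L<b. g L * (\<Prod>q\<in>I. Abs_fps (f q)) $ L)"
  using assms
proof (induction I arbitrary: g rule: finite_induct)
  case empty
  show ?case
  proof (cases b)
    case 0 then show ?thesis using empty by simp
  next
    case (Suc b')
    have "(\<Sum>L<b. g L * (1::real fps) $ L) = (\<Sum>L<b. if L = 0 then g 0 else 0)"
      by (intro sum.cong) auto
    also have "\<dots> = g 0" using Suc by (simp add: sum.delta)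
    finally show ?thesis by simp
  qed
next
  case (insert x I)
  define P where "P = (\<Prod>q\<in>I. Abs_fps (f q))"
  define F where "F t L = f x t * (g (t + L) * P $ L)" for t L
  have inj: "inj_on (\<lambda>(y, g). g(x := y)) ({..<b} \<times> PiE I (\<lambda>_. {..<b}))"
    using inj_combinator[of x I "\<lambda>_. {..<b}"] insert by simp
  have "(\<Sum>l\<in>PiE (insert x I) (\<lambda>_. {..<b}). g (\<Sum>q\<in>insert x I. l q) * (\<Prod>q\<in>insert x I. f q (l q)))
      = (\<Sum>(t, l)\<in>{..<b} \<times> PiE I (\<lambda>_. {..<b}). g (\<Sum>q\<in>insert x I. (l(x := t::nat)) q) * (\<Prod>q\<in>insert x I. f q ((l(x := t)) q)))"
    unfolding PiE_insert_eq by (subst sum.reindex[OF inj]) (simp add: case_prod_beta)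
  also have "\<dots> = (\<Sum>(t, l)\<in>{..<b} \<times> PiE I (\<lambda>_. {..<b}). f x t * (g (t + (\<Sum>q\<in>I. l q)) * (\<Prod>q\<in>I. f q (l q))))"
  proof (intro sum.cong refl, clarify)
    fix t :: nat and l :: "nat \<Rightarrow> nat"
    have e1: "(\<Sum>q\<in>I. (l(x := t)) q) = (\<Sum>q\<in>I. l q)"
      using insert by (intro sum.cong) auto
    have e2: "(\<Prod>q\<in>I. f q ((l(x := t)) q)) = (\<Prod>q\<in>I. f q (l q))"
      using insert by (intro prod.cong) auto
    show "g (\<Sum>q\<in>insert x I. (l(x := t)) q) * (\<Prod>q\<in>insert x I. f q ((l(x := t)) q)) =
          f x t * (g (t + (\<Sum>q\<in>I. l q)) * (\<Prod>q\<in>I. f q (l q)))"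
      using insert e1 e2 by simp
  qed
  also have "\<dots> = (\<Sum>t<b. f x t * (\<Sum>l\<in>PiE I (\<lambda>_. {..<b}). g (t + (\<Sum>q\<in>I. l q)) * (\<Prod>q\<in>I. f q (l q))))"
    by (simp add: sum.cartesian_product[symmetric] sum_distrib_left)
  also have "\<dots> = (\<Sum>t<b. \<Sum>L<b. F t L)"
  proof (intro sum.cong refl)
    fix t
    have "(\<Sum>l\<in>PiE I (\<lambda>_. {..<b}). g (t + (\<Sum>q\<in>I. l q)) * (\<Prod>q\<in>I. f q (l q)))
        = (\<Sum>L<b. g (t + L) * P $ L)"
      unfolding P_def using insert by (intro insert.IH) auto
    then show "f x t * (\<Sum>l\<in>PiE I (\<lambda>_. {..<b}). g (t + (\<Sum>q\<in>I. l q)) * (\<Prod>q\<in>I. f q (l q))) = (\<Sum>L<b. F t L)"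
      by (simp add: F_def sum_distrib_left)
  qed
  also have "\<dots> = (\<Sum>(t, L)\<in>{..<b} \<times> {..<b}. F t L)"
    by (simp add: sum.cartesian_product)
  also have "\<dots> = (\<Sum>(t, L)\<in>{(t, L). t + L < b}. F t L)"
    using insert.prems by (intro sum.mono_neutral_right) (auto simp: F_def, meson not_less)
  also have "\<dots> = (\<Sum>k<b. \<Sum>i\<le>k. F i (k - i))"
    by (rule sum.triangle_reindex)
  also have "\<dots> = (\<Sum>L<b. g L * (Abs_fps (f x) * P) $ L)"
    unfolding fps_mult_nth atLeast0AtMost
    by (intro sum.cong refl) (auto simp: F_def sum_distrib_left mult_ac intro!: sum.cong)
  finally show ?case using insert by (simp add: P_def)
qed

lemma inner_sum:
  fixes y :: real
  assumes u: "u \<le> m" and N: "r + m < N"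
  shows "(\<Sum>s<Suc m - u. (pochhammer (- real m) (u + s) / pochhammer (- real N + real r) (u + s)) *
           (pochhammer (- real N) (s + j) * y / fact s))
       = pochhammer (- real m) u * pochhammer (- real N) j * y *
         pochhammer (real r + real u - real j) (m - u) / pochhammer (- real N + real r) m"
proof -
  define a where "a = - real N + real j"
  define c where "c = - real N + real r + real u"
  have split: "pochhammer (- real m) (u + s) / pochhammer (- real N + real r) (u + s) * (pochhammer (- real N) (s + j) * y / fact s)
     = (pochhammer (- real m) u / pochhammer (- real N + real r) u * pochhammer (- real N) j * y) *
       ((pochhammer a s * pochhammer (- real (m - u)) s) / (fact s * pochhammer c s))" for s
  proof -
    have "pochhammer (- real m) (u + s) = pochhammer (- real m) u * pochhammer (- real (m - u)) s"
      using u by (simp add: pochhammer_product' of_nat_diff)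
    moreover have "pochhammer (- real N + real r) (u + s) = pochhammer (- real N + real r) u * pochhammer c s"
      by (simp add: pochhammer_product' c_def add.assoc)
    moreover have "pochhammer (- real N) (s + j) = pochhammer (- real N) j * pochhammer a s"
      by (simp add: pochhammer_product' a_def add.commute[of s j])
    ultimately show ?thesis by (simp add: field_simps)
  qed
  have c: "\<forall>i \<in> {0..<m - u}. c \<noteq> - of_nat i"
  proof
    fix i assume "i \<in> {0..<m - u}"
    then have "real r + real u + real i < real N" using N u by auto
    then show "c \<noteq> - of_nat i" unfolding c_def by auto
  qed
  have "(\<Sum>s<Suc m - u. pochhammer (- real m) (u + s) / pochhammer (- real N + real r) (u + s) * (pochhammer (- real N) (s + j) * y / fact s))
     = (pochhammer (- real m) u / pochhammer (- real N + real r) u * pochhammer (- real N) j * y) *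
       (\<Sum>s\<in>{0..m - u}. (pochhammer a s * pochhammer (- real (m - u)) s) / (fact s * pochhammer c s))"
    unfolding split sum_distrib_left using u
    by (intro sum.cong) (auto simp: Suc_diff_le atLeast0AtMost lessThan_Suc_atMost)
  also have "(\<Sum>s\<in>{0..m - u}. (pochhammer a s * pochhammer (- real (m - u)) s) / (fact s * pochhammer c s))
      = pochhammer (c - a) (m - u) / pochhammer c (m - u)"
    using Vandermonde_pochhammer[OF c] by simp
  also have "c - a = real r + real u - real j" by (simp add: a_def c_def)
  also have "pochhammer (- real N + real r) u * pochhammer c (m - u) = pochhammer (- real N + real r) m"
    using pochhammer_product[of u m "- real N + real r"] u by (simp add: c_def add.assoc)
  then have "pochhammer (- real m) u / pochhammer (- real N + real r) u * pochhammer (- real N) j * y *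
       (pochhammer (real r + real u - real j) (m - u) / pochhammer c (m - u))
     = pochhammer (- real m) u * pochhammer (- real N) j * y *
         pochhammer (real r + real u - real j) (m - u) / pochhammer (- real N + real r) m"
    by (simp add: field_simps)
  finally show ?thesis .
qed

lemma coef_sum:
  fixes G :: "real fps"
  shows "(\<Sum>u<Suc m. G $ u * (pochhammer (- real m) u * pochhammer (real r + real u - real j) (m - u)))
     = (-1) ^ m * fact m * (Bs (real r + real m - 1 - real j) (-1) * G) $ m"
proof -
  define a where "a = real r + real m - 1 - real j"
  have "(Bs a (-1) * G) $ m = (G * Bs a (-1)) $ m" by (simp add: mult.commute)
  also have "\<dots> = (\<Sum>u<Suc m. G $ u * ((a gchoose (m - u)) * (-1) ^ (m - u)))"
    unfolding fps_mult_nth by (simp add: atLeast0AtMost lessThan_Suc_atMost)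
  finally have X: "(Bs a (-1) * G) $ m = (\<Sum>u<Suc m. G $ u * ((a gchoose (m - u)) * (-1) ^ (m - u)))" .
  have pt: "G $ u * (pochhammer (- real m) u * pochhammer (real r + real u - real j) (m - u))
      = (-1) ^ m * fact m * (G $ u * ((a gchoose (m - u)) * (-1) ^ (m - u)))" if "u < Suc m" for u
  proof -
    have um: "u \<le> m" using that by simp
    have p1: "pochhammer (- real m) u = (-1) ^ u * fact m / fact (m - u)"
      using um by (simp add: poch_neg_nat)
    have "a - real (m - u) + 1 = real r + real u - real j" using um by (simp add: a_def of_nat_diff)
    then have p2: "pochhammer (real r + real u - real j) (m - u) = (a gchoose (m - u)) * fact (m - u)"
      by (simp add: gbinomial_pochhammer')
    have s: "(-1::real) ^ m * (-1) ^ (m - u) = (-1) ^ u"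
    proof -
      have "(-1::real) ^ m = (-1) ^ u * (-1) ^ (m - u)" using um by (simp add: power_add[symmetric])
      moreover have "(-1::real) ^ (m - u) * (-1) ^ (m - u) = 1"
        by (simp add: power_add[symmetric] mult_2[symmetric] power_mult)
      ultimately show ?thesis by (metis mult.assoc mult.right_neutral)
    qed
    show ?thesis unfolding p1 p2 using s by (simp add: field_simps)
  qed
  show ?thesis unfolding a_def[symmetric] X sum_distrib_left using pt by (intro sum.cong) auto
qed

definition pochp :: "nat \<Rightarrow> real poly" where
  "pochp t = (\<Prod>s<t. [:real s, -1:])"

lemma poly_pochp: "poly (pochp t) x = pochhammer (- x) t"
  by (simp add: pochp_def poly_prod pochhammer_prod atLeast0LessThan)

lemma degree_pochp: "degree (pochp t) \<le> t"
proof -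
  have "degree (pochp t) \<le> (\<Sum>s<t. degree [:real s, -1:])"
    unfolding pochp_def using degree_prod_sum_le[of "{..<t}" "\<lambda>s. [:real s, -1:]"] by (simp add: o_def)
  also have "\<dots> \<le> (\<Sum>s<t. 1)" by (intro sum_mono) simp
  finally show ?thesis by simp
qed

context KR
begin

definition aa :: "nat \<Rightarrow> (nat \<Rightarrow> nat) \<Rightarrow> nat \<Rightarrow> nat \<Rightarrow> real" where
  "aa N n i L = pochhammer (- real (n i) + 1) L / pochhammer (- real N + real (abs_multi p n) - real (n i)) L"

definition cq :: "(nat \<Rightarrow> nat) \<Rightarrow> nat \<Rightarrow> nat \<Rightarrow> nat \<Rightarrow> real" where
  "cq n i q t = pochhammer (real (n q)) t / fact t * ((1 - pr q) / (pr i - pr q)) ^ t"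

definition Cst :: "nat \<Rightarrow> (nat \<Rightarrow> nat) \<Rightarrow> nat \<Rightarrow> real" where
  "Cst N n i = (-1) ^ (n i - 1) / (fact (n i - 1) * pochhammer (- real N) (abs_multi p n - n i) * (1 - pr i) ^ (n i - 1))
     * cc n i"

definition TT :: "nat \<Rightarrow> (nat \<Rightarrow> nat) \<Rightarrow> nat \<Rightarrow> (nat \<Rightarrow> nat) \<Rightarrow> real" where
  "TT N n i l = aa N n i (\<Sum>q<p. l q) * pr i powi (- int (l i)) / fact (l i) * (\<Prod>q\<in>{..<p} - {i}. cq n i q (l q))"

definition KP :: "nat \<Rightarrow> (nat \<Rightarrow> nat) \<Rightarrow> nat \<Rightarrow> real poly" where
  "KP N n i = (if n i = 0 then 0 else
     smult (Cst N n i) (\<Sum>l\<in>PiE {..<p} (\<lambda>_. {..<n i}). smult (TT N n i l) (pochp (l i))))"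

lemma poly_KP: "poly (KP N n i) x =
   (if n i = 0 then 0 else Cst N n i * (\<Sum>l\<in>PiE {..<p} (\<lambda>_. {..<n i}). TT N n i l * pochhammer (- x) (l i)))"
  by (simp add: KP_def poly_sum poly_pochp)

lemma KP_formula: "1 \<le> n i \<Longrightarrow> poly (KP N n i) x = kr_formula p N pr n i x"
  unfolding poly_KP kr_formula_def Cst_def cc_def TT_def aa_def cq_def Let_def
  by (simp add: sum_distrib_left mult_ac)

lemma degree_KP: "i < p \<Longrightarrow> degree (KP N n i) \<le> n i - 1"
proof -
  assume "i < p"
  show ?thesis
proof (cases "n i = 0")
  case True then show ?thesis by (simp add: KP_def)
next
  case False
  have "degree (\<Sum>l\<in>PiE {..<p} (\<lambda>_. {..<n i}). smult (TT N n i l) (pochp (l i))) \<le> n i - 1"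
  proof (rule degree_sum_le)
    show "finite (PiE {..<p} (\<lambda>_. {..<n i}))" by (simp add: finite_PiE)
  next
    fix l assume "l \<in> PiE {..<p} (\<lambda>_. {..<n i})"
    have "degree (smult (TT N n i l) (pochp (l i))) \<le> l i"
      using degree_smult_le degree_pochp order_trans by blast
    moreover have "l i < n i"
      using \<open>l \<in> PiE {..<p} (\<lambda>_. {..<n i})\<close> \<open>i < p\<close> by (auto simp: PiE_iff)
    ultimately show "degree (smult (TT N n i l) (pochp (l i))) \<le> n i - 1" by simp
  qed
  then show ?thesis using False by (simp add: KP_def order_trans[OF degree_smult_le])
qed
qed


lemma Abs_cq: "Abs_fps (cq n i q) = Bs (- real (n q)) (- zz i q)"
proof (rule fps_ext)
  fix t
  have "(- real (n q) gchoose t) * (- zz i q) ^ t = ((-1) ^ t * (-1) ^ t) * (pochhammer (real (n q)) t / fact t * zz i q ^ t)"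
    by (simp add: gbinomial_pochhammer power_minus[of "zz i q"] field_simps)
  also have "(-1::real) ^ t * (-1) ^ t = 1" by (simp add: power_add[symmetric] mult_2[symmetric] power_mult)
  finally show "Abs_fps (cq n i q) $ t = Bs (- real (n q)) (- zz i q) $ t"
    by (simp add: cq_def zz_def)
qed

lemma reindex_tri:
  fixes h :: "nat \<Rightarrow> nat \<Rightarrow> real"
  shows "(\<Sum>L<b. \<Sum>s\<le>L. h s (L - s)) = (\<Sum>u<b. \<Sum>s<b - u. h s u)"
proof -
  have "(\<Sum>L<b. \<Sum>s\<le>L. h s (L - s)) = (\<Sum>(s, u)\<in>{(s, u). s + u < b}. h s u)"
    by (rule sum.triangle_reindex[symmetric])
  also have "\<dots> = (\<Sum>(u, s)\<in>{(u, s). u + s < b}. h s u)"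
    by (rule sum.reindex_bij_witness[where i = prod.swap and j = prod.swap]) auto
  also have "{(u, s). u + s < b} = (SIGMA u:{..<b}. {..<b - u})" by auto
  also have "(\<Sum>(u, s)\<in>(SIGMA u:{..<b}. {..<b - u}). h s u) = (\<Sum>u<b. \<Sum>s<b - u. h s u)"
    by (rule sum.Sigma[symmetric]) auto
  finally show ?thesis .
qed

lemma mom_KP:
  assumes i: "i < p" and ni: "1 \<le> n i" and AN: "abs_multi p n \<le> N"
  shows "(\<Sum>k\<le>N. pochhammer (real k - real N) j * poly (KP N n i) (real k) * kr_weight N (pr i) k)
     = pochhammer (- real N) j / pochhammer (- real N) (abs_multi p n - 1) * W n i j"
proof -
  define A where "A = abs_multi p n"
  define m where "m = n i - 1"
  define r where "r = A - n i"
  have niA: "n i \<le> A" unfolding A_def abs_multi_def using i by (intro member_le_sum) auto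
  have Arm: "A = r + m + 1" "n i = Suc m" using niA ni by (auto simp: r_def m_def)
  define y where "y = (1 - pr i) ^ j"
  define ff where "ff q t = (if q = i then pochhammer (- real N) (t + j) * y / fact t else cq n i q t)" for q t
  define PI where "PI = PiE {..<p} (\<lambda>_. {..<n i})"
  have pi0: "0 < pr i" "pr i < 1" using pr01[OF i] by auto
  have S1: "(\<Sum>k\<le>N. pochhammer (real k - real N) j * poly (KP N n i) (real k) * kr_weight N (pr i) k)
      = Cst N n i * (\<Sum>l\<in>PI. TT N n i l * (pochhammer (- real N) (l i + j) * pr i ^ (l i) * y))"
  proof -
    have "(\<Sum>k\<le>N. pochhammer (real k - real N) j * poly (KP N n i) (real k) * kr_weight N (pr i) k)
      = Cst N n i * (\<Sum>l\<in>PI. TT N n i l * (\<Sum>k\<le>N. pochhammer (real k - real N) j * pochhammer (- real k) (l i) * kr_weight N (pr i) k))"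
      unfolding poly_KP PI_def using ni
      by (simp add: sum_distrib_left sum_distrib_right mult_ac sum.swap[of _ "{..N}"])
    then show ?thesis by (simp add: mom_basic y_def)
  qed
  have S2: "TT N n i l * (pochhammer (- real N) (l i + j) * pr i ^ (l i) * y)
      = aa N n i (\<Sum>q<p. l q) * (\<Prod>q<p. ff q (l q))" for l
  proof -
    have pp: "(\<Prod>q<p. ff q (l q)) = ff i (l i) * (\<Prod>q\<in>{..<p}-{i}. cq n i q (l q))"
      using i by (simp add: prod.remove ff_def)
    have pw: "pr i powi (- int (l i)) * pr i ^ (l i) = 1"
      using pi0 by (simp add: power_int_minus field_simps)
    have "TT N n i l * (pochhammer (- real N) (l i + j) * pr i ^ (l i) * y)
        = aa N n i (\<Sum>q<p. l q) * (pr i powi (- int (l i)) * pr i ^ (l i)) * (pochhammer (- real N) (l i + j) * y / fact (l i))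
          * (\<Prod>q\<in>{..<p}-{i}. cq n i q (l q))"
      by (simp add: TT_def)
    also have "\<dots> = aa N n i (\<Sum>q<p. l q) * (\<Prod>q<p. ff q (l q))"
      unfolding pw pp by (simp add: ff_def)
    finally show ?thesis .
  qed
  have aa0: "aa N n i L = 0" if "n i \<le> L" for L
  proof -
    have "pochhammer (- real m) L = 0" using that Arm by (simp add: pochhammer_of_nat_eq_0_iff)
    moreover have "- real (n i) + 1 = - real m" using Arm by simp
    ultimately show ?thesis by (simp add: aa_def)
  qed
  have S3: "(\<Sum>l\<in>PI. aa N n i (\<Sum>q<p. l q) * (\<Prod>q<p. ff q (l q)))
      = (\<Sum>L<n i. aa N n i L * (\<Prod>q<p. Abs_fps (ff q)) $ L)"
    unfolding PI_def by (rule PiE_conv) (auto simp: aa0)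
  have S4: "(\<Prod>q<p. Abs_fps (ff q)) = Abs_fps (ff i) * GG n i"
  proof -
    have "(\<Prod>q<p. Abs_fps (ff q)) = Abs_fps (ff i) * (\<Prod>q\<in>{..<p}-{i}. Abs_fps (ff q))"
      using i by (simp add: prod.remove)
    also have "(\<Prod>q\<in>{..<p}-{i}. Abs_fps (ff q)) = GG n i"
      unfolding GG_def
    proof (intro prod.cong refl)
      fix q assume "q \<in> {..<p} - {i}"
      then have "ff q = cq n i q" by (auto simp: ff_def)
      then show "Abs_fps (ff q) = Bs (- real (n q)) (- zz i q)" by (simp add: Abs_cq)
    qed
    finally show ?thesis .
  qed
  define G where "G = GG n i"
  have S6: "(\<Sum>L<n i. aa N n i L * (Abs_fps (ff i) * G) $ L)
      = (\<Sum>u<n i. G $ u * (\<Sum>s<n i - u. aa N n i (u + s) * ff i s))"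
  proof -
    have "(\<Sum>L<n i. aa N n i L * (Abs_fps (ff i) * G) $ L) = (\<Sum>L<n i. \<Sum>s\<le>L. aa N n i (s + (L - s)) * ff i s * G $ (L - s))"
      unfolding fps_mult_nth atLeast0AtMost by (simp add: sum_distrib_left mult_ac)
    also have "\<dots> = (\<Sum>u<n i. \<Sum>s<n i - u. aa N n i (s + u) * ff i s * G $ u)"
      by (rule reindex_tri[where h = "\<lambda>s u. aa N n i (s + u) * ff i s * G $ u"])
    finally show ?thesis by (simp add: sum_distrib_left mult_ac add.commute)
  qed
  have rN: "r + m < N" using Arm AN by (simp add: A_def)
  have S7: "(\<Sum>s<n i - u. aa N n i (u + s) * ff i s)
     = pochhammer (- real m) u * pochhammer (- real N) j * y *
         pochhammer (real r + real u - real j) (m - u) / pochhammer (- real N + real r) m" if "u < n i" for u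
  proof -
    have e1: "- real (n i) + 1 = - real m" "- real N + real (abs_multi p n) - real (n i) = - real N + real r"
      using Arm by (auto simp: A_def[symmetric])
    have "(\<Sum>s<n i - u. aa N n i (u + s) * ff i s) = (\<Sum>s<Suc m - u. (pochhammer (- real m) (u + s) / pochhammer (- real N + real r) (u + s)) *
           (pochhammer (- real N) (s + j) * y / fact s))"
      unfolding aa_def e1 ff_def unfolding Arm(2) by simp
    also have "\<dots> = pochhammer (- real m) u * pochhammer (- real N) j * y *
         pochhammer (real r + real u - real j) (m - u) / pochhammer (- real N + real r) m"
      using that Arm rN by (intro inner_sum) auto
    finally show ?thesis .
  qed
  have S8: "(\<Sum>u<n i. G $ u * (\<Sum>s<n i - u. aa N n i (u + s) * ff i s))
      = (pochhammer (- real N) j * y / pochhammer (- real N + real r) m) * ((-1) ^ m * fact m * (Bs (real r + real m - 1 - real j) (-1) * G) $ m)"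
  proof -
    have "(\<Sum>u<n i. G $ u * (\<Sum>s<n i - u. aa N n i (u + s) * ff i s))
       = (\<Sum>u<Suc m. (pochhammer (- real N) j * y / pochhammer (- real N + real r) m) *
            (G $ u * (pochhammer (- real m) u * pochhammer (real r + real u - real j) (m - u))))"
      unfolding Arm(2) using S7 Arm(2) by (intro sum.cong refl) (simp add: field_simps)
    also have "\<dots> = (pochhammer (- real N) j * y / pochhammer (- real N + real r) m) * ((-1) ^ m * fact m * (Bs (real r + real m - 1 - real j) (-1) * G) $ m)"
      by (simp only: sum_distrib_left[symmetric] coef_sum)
    finally show ?thesis .
  qed
  have LHS: "(\<Sum>k\<le>N. pochhammer (real k - real N) j * poly (KP N n i) (real k) * kr_weight N (pr i) k)
      = Cst N n i * ((pochhammer (- real N) j * y / pochhammer (- real N + real r) m) * ((-1) ^ m * fact m * (Bs (real r + real m - 1 - real j) (-1) * G) $ m))"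
    unfolding S1 S2 S3 S4 G_def[symmetric] S6 S8 by simp
  have Bse: "real r + real m - 1 - real j = real (abs_multi p n) - 2 - real j" using Arm by (simp add: A_def[symmetric])
  have pN: "pochhammer (- real N) (abs_multi p n - 1) = pochhammer (- real N) r * pochhammer (- real N + real r) m"
    using Arm by (simp add: A_def[symmetric] pochhammer_product')
  have nz1: "pochhammer (- real N) r \<noteq> 0" using rN by (simp add: pochhammer_of_nat_eq_0_iff)
  have nz2: "pochhammer (- real N + real r) m \<noteq> 0"
    unfolding pochhammer_eq_0_iff using rN by auto
  have pw: "(1 - pr i) powi (int j - int m) = y / (1 - pr i) ^ m"
    using pi0 by (simp add: y_def power_int_diff)
  have nz3: "(1 - pr i) ^ m \<noteq> 0" using pi0 by simp
  have W: "W n i j = y / (1 - pr i) ^ m * cc n i * (Bs (real r + real m - 1 - real j) (-1) * G) $ m"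
    unfolding W_def using ni by (simp add: pw Bse G_def Arm(2))
  have mm: "(-1::real) ^ m * (-1) ^ m = 1" by (simp add: power_add[symmetric] mult_2[symmetric] power_mult)
  have rr: "A - Suc m = r" using Arm by simp
  show ?thesis unfolding LHS W pN Cst_def
    using nz1 nz2 nz3 mm by (simp add: Arm(2) r_def[symmetric] A_def[symmetric] rr field_simps)
qed

end

fun tp :: "nat \<Rightarrow> nat \<Rightarrow> real poly" where
  "tp N 0 = 1"
| "tp N (Suc j) = tp N j * [:real j - real N, 1:]"

lemma poly_tp: "poly (tp N j) x = pochhammer (x - real N) j"
  by (induction j) (simp_all add: pochhammer_Suc algebra_simps)

lemma tp_monic: "degree (tp N j) = j \<and> coeff (tp N j) j = 1"
proof (induction j)
  case 0 then show ?case by simp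
next
  case (Suc j)
  have nz: "tp N j \<noteq> 0" using Suc by auto
  have "degree (tp N j * [:real j - real N, 1:]) = degree (tp N j) + degree [:real j - real N, 1:]"
    using nz by (intro degree_mult_eq) auto
  then have "degree (tp N (Suc j)) = j + 1"
    using Suc by simp
  moreover have "lead_coeff (tp N j * [:real j - real N, 1:]) = lead_coeff (tp N j) * lead_coeff [:real j - real N, 1:]"
    by (rule lead_coeff_mult)
  then have "lead_coeff (tp N (Suc j)) = 1"
    using Suc by simp
  ultimately show ?case by simp
qed

lemma deg_drop:
  fixes f :: "real poly"
  assumes "degree f \<le> d" "coeff f d = 0"
  shows "(d = 0 \<longrightarrow> f = 0) \<and> degree f \<le> d - 1"
proof (cases "f = 0")
  case True then show ?thesis by simp
next
  case False
  then have "coeff f (degree f) \<noteq> 0" by simp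
  then have "degree f \<noteq> d" using assms by auto
  then have "degree f < d" using assms by simp
  then show ?thesis by auto
qed

context KR
begin

definition mom :: "nat \<Rightarrow> (nat \<Rightarrow> real poly) \<Rightarrow> real poly \<Rightarrow> real" where
  "mom N K T = (\<Sum>i<p. \<Sum>k\<le>N. poly T (real k) * poly (K i) (real k) * kr_weight N (pr i) k)"

lemma mom_add: "mom N K (T1 + T2) = mom N K T1 + mom N K T2"
  by (simp add: mom_def algebra_simps sum.distrib)

lemma mom_smult: "mom N K (smult c T) = c * mom N K T"
  by (simp add: mom_def sum_distrib_left mult_ac)

lemma mom_diff: "mom N K (T1 - T2) = mom N K T1 - mom N K T2"
  by (simp add: mom_def algebra_simps sum_subtractf)

lemma mom_conv:
  assumes h: "\<And>j. j + 1 \<le> A \<Longrightarrow> mom N K (tp N j) = (if j + 1 = A then 1 else 0)"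
  shows "degree T \<le> A - 1 \<Longrightarrow> 1 \<le> A \<Longrightarrow> mom N K T = coeff T (A - 1)"
proof (induction "degree T" arbitrary: T rule: less_induct)
  case less
  define d where "d = degree T"
  define c where "c = coeff T d"
  define R where "R = T - smult c (tp N d)"
  have tpd: "degree (tp N d) = d" "coeff (tp N d) d = 1" using tp_monic by auto
  have degR: "degree R \<le> d" unfolding R_def d_def
    using degree_diff_le[of T d "smult c (tp N d)"] degree_smult_le[of c "tp N d"] tpd by (simp add: d_def)
  have cR: "coeff R d = 0" unfolding R_def c_def using tpd by simp
  have momR: "mom N K R = coeff R (A - 1)"
  proof (cases "R = 0")
    case True then show ?thesis by (simp add: mom_def)
  next
    case False
    then have "degree R < d" using deg_drop[OF degR cR] by (cases d) auto
    then show ?thesis using less d_def by auto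
  qed
  have T: "T = smult c (tp N d) + R" unfolding R_def by simp
  have "mom N K T = c * mom N K (tp N d) + mom N K R"
    by (subst T) (simp add: mom_add mom_smult)
  also have "mom N K (tp N d) = (if d + 1 = A then 1 else 0)"
    using h less by (simp add: d_def)
  also have "coeff T (A - 1) = c * coeff (tp N d) (A - 1) + coeff R (A - 1)"
    by (subst T) simp
  moreover have "coeff (tp N d) (A - 1) = (if d + 1 = A then 1 else 0)"
  proof (cases "d + 1 = A")
    case True then show ?thesis using tpd by (auto simp: d_def)
  next
    case False
    then have "d < A - 1" using less by (simp add: d_def)
    then show ?thesis using tpd False by (simp add: coeff_eq_0)
  qed
  ultimately show ?case using momR by simp
qed

lemma KP_tp_moments:
  assumes AN: "abs_multi p n \<le> N" and j: "j + 1 \<le> abs_multi p n"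
  shows "mom N (KP N n) (tp N j) = (if j + 1 = abs_multi p n then 1 else 0)"
proof -
  define A where "A = abs_multi p n"
  define c where "c = pochhammer (- real N) j / pochhammer (- real N) (A - 1)"
  have "mom N (KP N n) (tp N j) = (\<Sum>i<p. c * W n i j)"
    unfolding mom_def poly_tp
  proof (intro sum.cong refl)
    fix i assume i: "i \<in> {..<p}"
    show "(\<Sum>k\<le>N. pochhammer (real k - real N) j * poly (KP N n i) (real k) * kr_weight N (pr i) k) = c * W n i j"
    proof (cases "n i = 0")
      case True then show ?thesis by (simp add: KP_def W_def)
    next
      case False
      then show ?thesis using mom_KP[of i n N j] i AN by (simp add: c_def A_def)
    qed
  qed
  also have "\<dots> = c * (if j + 1 = A then 1 else 0)"
    using W_sum[of n A j] j by (simp add: sum_distrib_left[symmetric] A_def)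
  also have "\<dots> = (if j + 1 = A then 1 else 0)"
  proof (cases "j + 1 = A")
    case True
    then have "j = A - 1" by simp
    moreover have "pochhammer (- real N) (A - 1) \<noteq> 0" using AN by (simp add: pochhammer_of_nat_eq_0_iff A_def)
    ultimately show ?thesis using True by (simp add: c_def)
  qed simp
  finally show ?thesis by (simp add: A_def)
qed

lemma KP_moments:
  assumes AN: "abs_multi p n \<le> N" and j: "j + 1 \<le> abs_multi p n"
  shows "(\<Sum>i<p. \<Sum>k\<le>N. real k ^ j * poly (KP N n i) (real k) * kr_weight N (pr i) k)
       = (if j + 1 = abs_multi p n then 1 else 0)"
proof -
  have "mom N (KP N n) (monom 1 j) = coeff (monom (1::real) j) (abs_multi p n - 1)"
    using mom_conv[of "abs_multi p n" N "KP N n" "monom 1 j"] KP_tp_moments[OF AN] j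
    by (simp add: degree_monom_eq)
  then show ?thesis using j by (auto simp: mom_def poly_monom)
qed

lemma KP_typeI:
  assumes AN: "abs_multi p n \<le> N"
  shows "is_typeI p N pr n (KP N n)"
proof -
  have "KP N n i = 0" if "n i = 0" for i using that by (simp add: KP_def)
  then show ?thesis
    unfolding is_typeI_def using KP_moments[OF AN] degree_KP by blast
qed

end

context KR
begin

definition momj :: "nat \<Rightarrow> (nat \<Rightarrow> real poly) \<Rightarrow> nat \<Rightarrow> real" where
  "momj N Q j = (\<Sum>i<p. \<Sum>k\<le>N. real k ^ j * poly (Q i) (real k) * kr_weight N (pr i) k)"

lemma momj_lin: "momj N (\<lambda>i. Q i - smult c (P i)) j = momj N Q j - c * momj N P j"
  by (simp add: momj_def algebra_simps sum_subtractf sum_distrib_left)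

lemma uniq:
  "abs_multi p n = A \<Longrightarrow> A \<le> N \<Longrightarrow>
   (\<forall>i<p. (n i = 0 \<longrightarrow> Q i = 0) \<and> degree (Q i) \<le> n i - 1) \<Longrightarrow>
   (\<forall>j. j + 1 \<le> A \<longrightarrow> momj N Q j = 0) \<Longrightarrow> \<forall>i<p. Q i = 0"
proof (induction A arbitrary: n Q)
  case 0
  have "n i = 0" if "i < p" for i
    using 0(1) that unfolding abs_multi_def by (simp add: sum_eq_0_iff)
  then show ?case using 0(3) by blast
next
  case (Suc A0)
  have "\<exists>k<p. 1 \<le> n k"
  proof (rule ccontr)
    assume "\<not> ?thesis"
    then have "abs_multi p n = 0" unfolding abs_multi_def by (intro sum.neutral) auto
    then show False using Suc.prems by simp
  qed
  then obtain k where k: "k < p" "1 \<le> n k" by blast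
  define n' where "n' = n(k := n k - 1)"
  have An': "abs_multi p n' = A0" using abs_multi_dec[of k p n, OF k] Suc.prems by (simp add: n'_def)
  define P where "P = KP N n"
  have AN: "abs_multi p n \<le> N" using Suc.prems by simp
  have Pdeg: "\<forall>i<p. (n i = 0 \<longrightarrow> P i = 0) \<and> degree (P i) \<le> n i - 1"
  proof (intro allI impI)
    fix i assume i: "i < p"
    have "n i = 0 \<longrightarrow> P i = 0" by (simp add: P_def KP_def)
    moreover have "degree (P i) \<le> n i - 1" using degree_KP[OF i] by (simp add: P_def)
    ultimately show "(n i = 0 \<longrightarrow> P i = 0) \<and> degree (P i) \<le> n i - 1" by blast
  qed
  have Pmom: "momj N P j = (if j + 1 = Suc A0 then 1 else 0)" if "j + 1 \<le> Suc A0" for j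
    using KP_moments[OF AN, of j] that Suc.prems by (simp add: momj_def P_def)
  \<comment> \<open>members of the space for n' with vanishing moments vanish\<close>
  have red: "\<forall>i<p. R i = 0"
    if R1: "\<forall>i<p. (n i = 0 \<longrightarrow> R i = 0) \<and> degree (R i) \<le> n i - 1"
      and R2: "coeff (R k) (n k - 1) = 0"
      and R3: "\<forall>j. j + 1 \<le> A0 \<longrightarrow> momj N R j = 0" for R
  proof -
    have dd: "(n k - 1 = 0 \<longrightarrow> R k = 0) \<and> degree (R k) \<le> n k - 1 - 1"
      using deg_drop[of "R k" "n k - 1"] R1 R2 k by auto
    have "\<forall>i<p. (n' i = 0 \<longrightarrow> R i = 0) \<and> degree (R i) \<le> n' i - 1"
      using R1 dd by (auto simp: n'_def)
    then show ?thesis using Suc.IH[OF An'] R3 Suc.prems(2) by (metis Suc_leD)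
  qed
  have cP: "coeff (P k) (n k - 1) \<noteq> 0"
  proof
    assume "coeff (P k) (n k - 1) = 0"
    moreover have "\<forall>j. j + 1 \<le> A0 \<longrightarrow> momj N P j = 0" using Pmom by simp
    ultimately have "\<forall>i<p. P i = 0" using red[OF Pdeg] by blast
    then have "momj N P A0 = 0" by (simp add: momj_def)
    then show False using Pmom[of A0] by simp
  qed
  define c where "c = coeff (Q k) (n k - 1) / coeff (P k) (n k - 1)"
  define Q' where "Q' i = Q i - smult c (P i)" for i
  have Q'1: "\<forall>i<p. (n i = 0 \<longrightarrow> Q' i = 0) \<and> degree (Q' i) \<le> n i - 1"
  proof (intro allI impI)
    fix i assume i: "i < p"
    have A: "n i = 0 \<longrightarrow> Q' i = 0" using Suc.prems(3) Pdeg i by (simp add: Q'_def)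
    have "degree (Q' i) \<le> max (degree (Q i)) (degree (smult c (P i)))"
      unfolding Q'_def by (rule degree_diff_le_max)
    also have "\<dots> \<le> n i - 1" using Suc.prems(3) Pdeg i degree_smult_le[of c "P i"] by auto
    finally show "(n i = 0 \<longrightarrow> Q' i = 0) \<and> degree (Q' i) \<le> n i - 1" using A by simp
  qed
  have Q'2: "coeff (Q' k) (n k - 1) = 0" using cP by (simp add: Q'_def c_def)
  have Q'3: "\<forall>j. j + 1 \<le> A0 \<longrightarrow> momj N Q' j = 0"
  proof (intro allI impI)
    fix j assume j: "j + 1 \<le> A0"
    have "momj N Q' j = momj N Q j - c * momj N P j" unfolding Q'_def by (rule momj_lin)
    also have "momj N Q j = 0" using Suc.prems(4) j by simp
    also have "momj N P j = 0" using Pmom[of j] j by simp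
    finally show "momj N Q' j = 0" by simp
  qed
  have Q'0: "\<forall>i<p. Q' i = 0" using red[OF Q'1 Q'2 Q'3] .
  then have "momj N Q' A0 = 0" by (simp add: momj_def)
  moreover have "momj N Q' A0 = momj N Q A0 - c * momj N P A0" unfolding Q'_def by (rule momj_lin)
  ultimately have "c = 0" using Suc.prems(4) Pmom[of A0] by simp
  then show ?case using Q'0 by (simp add: Q'_def)
qed

end

lemma typeI_cong:
  assumes "\<And>i. i < p \<Longrightarrow> K i = P i"
  shows "is_typeI p N pr n K = is_typeI p N pr n P"
proof -
  have "(\<Sum>i<p. \<Sum>k\<le>N. real k ^ j * poly (K i) (real k) * kr_weight N (pr i) k)
      = (\<Sum>i<p. \<Sum>k\<le>N. real k ^ j * poly (P i) (real k) * kr_weight N (pr i) k)" for j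
    using assms by (intro sum.cong) auto
  then show ?thesis unfolding is_typeI_def using assms by auto
qed

theorem mainTheorem13:
  fixes p N :: nat and pr :: "nat \<Rightarrow> real" and n :: "nat \<Rightarrow> nat"
    and K :: "nat \<Rightarrow> real poly"
  assumes "\<And>q. q < p \<Longrightarrow> 0 < pr q \<and> pr q < 1"
    and "inj_on pr {..<p}"
    and "abs_multi p n \<le> N"
  shows "is_typeI p N pr n K \<longleftrightarrow>
    (\<forall>i<p. (n i = 0 \<longrightarrow> K i = 0) \<and>
           (1 \<le> n i \<longrightarrow> (\<forall>x. poly (K i) x = kr_formula p N pr n i x)))"
proof -
  interpret KR p pr using assms(1,2) by unfold_locales auto
  define P where "P = KP N n"
  have PI: "is_typeI p N pr n P" using KP_typeI[OF assms(3)] by (simp add: P_def)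
  have Pf: "poly (P i) x = kr_formula p N pr n i x" if "1 \<le> n i" for i x
    using KP_formula[of n i N x, OF that] by (simp add: P_def)
  have P0: "P i = 0" if "n i = 0" for i using that by (simp add: P_def KP_def)
  show ?thesis
  proof
    assume K: "is_typeI p N pr n K"
    define Q where "Q i = K i - smult 1 (P i)" for i
    have "\<forall>i<p. Q i = 0"
    proof (rule uniq[OF refl assms(3)])
      show "\<forall>i<p. (n i = 0 \<longrightarrow> Q i = 0) \<and> degree (Q i) \<le> n i - 1"
      proof (intro allI impI)
        fix i assume i: "i < p"
        have dK: "degree (K i) \<le> n i - 1" using K i unfolding is_typeI_def by (cases "n i = 0") auto
        have dP: "degree (P i) \<le> n i - 1" using PI i unfolding is_typeI_def by (cases "n i = 0") auto
        have "degree (Q i) \<le> max (degree (K i)) (degree (smult 1 (P i)))"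
          unfolding Q_def by (rule degree_diff_le_max)
        then have "degree (Q i) \<le> n i - 1" using dK dP by simp
        moreover have "n i = 0 \<longrightarrow> Q i = 0" using K i P0 unfolding is_typeI_def Q_def by auto
        ultimately show "(n i = 0 \<longrightarrow> Q i = 0) \<and> degree (Q i) \<le> n i - 1" by simp
      qed
      show "\<forall>j. j + 1 \<le> abs_multi p n \<longrightarrow> momj N Q j = 0"
      proof (intro allI impI)
        fix j assume j: "j + 1 \<le> abs_multi p n"
        have "momj N Q j = momj N K j - 1 * momj N P j" unfolding Q_def by (rule momj_lin)
        also have "momj N K j = (if j + 1 = abs_multi p n then 1 else 0)"
          using K j unfolding is_typeI_def momj_def by blast
        also have "momj N P j = (if j + 1 = abs_multi p n then 1 else 0)"
          using PI j unfolding is_typeI_def momj_def by blast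
        finally show "momj N Q j = 0" by simp
      qed
    qed
    then have KP: "K i = P i" if "i < p" for i using that by (simp add: Q_def)
    show "\<forall>i<p. (n i = 0 \<longrightarrow> K i = 0) \<and> (1 \<le> n i \<longrightarrow> (\<forall>x. poly (K i) x = kr_formula p N pr n i x))"
      using KP P0 Pf by simp
  next
    assume R: "\<forall>i<p. (n i = 0 \<longrightarrow> K i = 0) \<and> (1 \<le> n i \<longrightarrow> (\<forall>x. poly (K i) x = kr_formula p N pr n i x))"
    have "K i = P i" if i: "i < p" for i
    proof (cases "n i = 0")
      case True then show ?thesis using R i P0 by simp
    next
      case False
      then have "\<forall>x. poly (K i) x = poly (P i) x" using R i Pf by simp
      then show ?thesis by (simp add: poly_eq_poly_eq_iff[symmetric] fun_eq_iff)
    qed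
    then show "is_typeI p N pr n K" using PI typeI_cong by blast
  qed
qed

end
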